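(* The unique solution $h$ of the system \[ h(\emptyset,J)=\delta_{\emptyset,J},\qquad h(I,J)=e^{2b_{\iota(I)}}\sum_{K\subset J}\Bigl(\prod_{i\in K}|\zeta_{i,\iota(I)}|\Bigr)h(I'\cup K,J\setminus K)\quad\text{if }I\ne\emptyset \] (for disjoint $I,J\subset\{1,\dots,n\}$, $I'=I\setminus\{\iota(I)\}$) is \[ h(I,J)=\Bigl(\prod_{i\in I\cup J}e^{2b_i}\Bigr)\sum_{G\in\mathcal{F}_I(J)}\prod_{\{i,j\}\in G}|\zeta_{ij}|. \]
   Context: $n\ge1$, $b_1,\dots,b_n\ge0$ real, $\zeta_{ij}=\zeta_{ji}$ complex for $1\le i,j\le n$. $\iota$ is a function assigning to each nonempty $I\subset\{1,\dots,n\}$ an element $\iota(I)\in I$. For disjoint $I,J$, $\mathcal{F}_I(J)$ denotes the set of forests on vertex set $I\cup J$ rooted in $I$, i.e. forests each of whose trees contains exactly one element of $I$ (a forest may have isolated vertices; $\mathcal{F}_\emptyset(\emptyset)$ consists of the empty graph and $\mathcal{F}_\emptyset(J)=\emptyset$ for $J\ne\emptyset$). Empty sums are $0$, empty products are $1$. *)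

theory Defs
  imports Complex_Main
begin

definition is_graph_on :: "nat set \<Rightarrow> nat set set \<Rightarrow> bool" where
  "is_graph_on V E \<longleftrightarrow> (\<forall>e\<in>E. \<exists>i j. i \<in> V \<and> j \<in> V \<and> i \<noteq> j \<and> e = {i, j})"

definition has_cycle :: "nat set set \<Rightarrow> bool" where
  "has_cycle E \<longleftrightarrow> (\<exists>vs. length vs \<ge> 3 \<and> distinct vs \<and>
      (\<forall>k < length vs. {vs ! k, vs ! ((k + 1) mod length vs)} \<in> E))"

definition is_forest_on :: "nat set \<Rightarrow> nat set set \<Rightarrow> bool" where
  "is_forest_on V E \<longleftrightarrow> is_graph_on V E \<and> \<not> has_cycle E"

text \<open>Connectedness (same connected component = same tree of the forest).\<close>
definition connected_in :: "nat set set \<Rightarrow> nat \<Rightarrow> nat \<Rightarrow> bool" where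
  "connected_in E u v \<longleftrightarrow> (u, v) \<in> {(x, y). {x, y} \<in> E}\<^sup>*"

text \<open>F_I(J): forests on I \<union> J each of whose trees contains exactly one element of I.\<close>
definition rooted_forests :: "nat set \<Rightarrow> nat set \<Rightarrow> nat set set set" where
  "rooted_forests I J = {E. is_forest_on (I \<union> J) E \<and>
      (\<forall>v \<in> I \<union> J. card {r \<in> I. connected_in E v r} = 1)}"

definition forest_weight :: "(nat \<Rightarrow> nat \<Rightarrow> complex) \<Rightarrow> nat set set \<Rightarrow> real" where
  "forest_weight \<zeta> G = (\<Prod>(i, j) \<in> {(i, j). i < j \<and> {i, j} \<in> G}. cmod (\<zeta> i j))"

definition solves_system ::
  "nat \<Rightarrow> (nat \<Rightarrow> real) \<Rightarrow> (nat \<Rightarrow> nat \<Rightarrow> complex) \<Rightarrow> (nat set \<Rightarrow> nat) \<Rightarrow>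
   (nat set \<Rightarrow> nat set \<Rightarrow> real) \<Rightarrow> bool" where
  "solves_system n b \<zeta> \<iota> h \<longleftrightarrow>
     (\<forall>I J. I \<subseteq> {1..n} \<and> J \<subseteq> {1..n} \<and> I \<inter> J = {} \<longrightarrow>
        (I = {} \<longrightarrow> h {} J = (if J = {} then 1 else 0)) \<and>
        (I \<noteq> {} \<longrightarrow> h I J = exp (2 * b (\<iota> I)) *
            (\<Sum>K\<in>Pow J. (\<Prod>i\<in>K. cmod (\<zeta> i (\<iota> I))) * h ((I - {\<iota> I}) \<union> K) (J - K))))"

end

theory Submission imports Defs begin

lemma conn_refl: "connected_in E u u"
  by (simp add: connected_in_def)

lemma conn_edge: "{u,v} \<in> E \<Longrightarrow> connected_in E u v"
  by (auto simp: connected_in_def)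

lemma conn_trans: "connected_in E u v \<Longrightarrow> connected_in E v w \<Longrightarrow> connected_in E u w"
  unfolding connected_in_def by (rule rtrancl_trans)

lemma conn_step: "connected_in E u v \<Longrightarrow> {v,w} \<in> E \<Longrightarrow> connected_in E u w"
  unfolding connected_in_def by (auto intro: rtrancl_into_rtrancl)

lemma conn_sym: "connected_in E u v \<Longrightarrow> connected_in E v u"
  unfolding connected_in_def
proof (induction rule: rtrancl_induct)
  case base then show ?case by simp
next
  case (step y z)
  have "(z, y) \<in> {(x, y). {x, y} \<in> E}" using step(2) by (auto simp: insert_commute)
  then show ?case using step(3) by (rule converse_rtrancl_into_rtrancl)
qed

lemma conn_mono: "E \<subseteq> E' \<Longrightarrow> connected_in E u v \<Longrightarrow> connected_in E' u v"
  unfolding connected_in_def by (erule rtrancl_mono[THEN subsetD, rotated]) auto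

lemma conn_avoid: assumes "\<forall>e\<in>E. r \<notin> e" "connected_in E u r" shows "u = r"
  using assms(2) unfolding connected_in_def
  by (rule rtranclE) (use assms(1) in auto)

lemma conn_decomp:
  assumes av: "\<forall>e\<in>F'. r \<notin> e"
    and c: "connected_in (F' \<union> (\<lambda>k. {r,k}) ` K) u w"
  shows "connected_in F' u w \<or> ((u = r \<or> (\<exists>k\<in>K. connected_in F' u k)) \<and> (w = r \<or> (\<exists>k\<in>K. connected_in F' w k)))"
  using c unfolding connected_in_def[of "F' \<union> _"]
proof (induction rule: rtrancl_induct)
  case base then show ?case by (simp add: conn_refl)
next
  case (step y z)
  from step(2) have e: "{y,z} \<in> F' \<or> (\<exists>k\<in>K. {y,z} = {r,k})" by auto
  show ?case
  proof (cases "{y,z} \<in> F'")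
    case True
    have zy: "connected_in F' z y" using True by (intro conn_edge) (simp add: insert_commute)
    have "y \<noteq> r" using True av by auto
    with step(3) True zy show ?thesis
      by (meson conn_step conn_trans)
  next
    case False
    then obtain k where k: "k \<in> K" "{y,z} = {r,k}" using e by auto
    have ry: "y = r \<or> y = k" and rz: "z = r \<or> z = k" using k(2) by (auto simp: doubleton_eq_iff)
    have ru: "u = r \<or> (\<exists>k\<in>K. connected_in F' u k)"
      using step(3)
    proof
      assume "connected_in F' u y"
      then show ?thesis using ry k(1) conn_avoid[OF av] by auto
    qed auto
    show ?thesis using ru rz k(1) conn_refl by blast
  qed
qed


lemma conn_path:
  assumes "connected_in E u w"
  shows "\<exists>p. p \<noteq> [] \<and> hd p = u \<and> last p = w \<and> distinct p \<and> (\<forall>k. Suc k < length p \<longrightarrow> {p!k, p!Suc k} \<in> E)"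
  using assms unfolding connected_in_def
proof (induction rule: converse_rtrancl_induct)
  case base
  then show ?case by (intro exI[of _ "[w]"]) auto
next
  case (step u y)
  then obtain p where p: "p \<noteq> []" "hd p = y" "last p = w" "distinct p"
    "\<forall>k. Suc k < length p \<longrightarrow> {p!k, p!Suc k} \<in> E" by blast
  have uy: "{u,y} \<in> E" using step(1) by auto
  show ?case
  proof (cases "u \<in> set p")
    case True
    then obtain i where i: "i < length p" "p ! i = u" by (auto simp: in_set_conv_nth)
    let ?q = "drop i p"
    have "?q \<noteq> []" using i by auto
    moreover have "hd ?q = u" using i by (simp add: hd_drop_conv_nth)
    moreover have "last ?q = w" using i p(3) by simp
    moreover have "distinct ?q" using p(4) by simp
    moreover have "\<forall>k. Suc k < length ?q \<longrightarrow> {?q!k, ?q!Suc k} \<in> E"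
      using p(5) i by (auto simp: add.commute)
    ultimately show ?thesis by blast
  next
    case False
    let ?q = "u # p"
    have "\<forall>k. Suc k < length ?q \<longrightarrow> {?q!k, ?q!Suc k} \<in> E"
    proof (intro allI impI)
      fix k assume "Suc k < length ?q"
      then show "{?q!k, ?q!Suc k} \<in> E"
        using p uy by (cases k) (auto simp: hd_conv_nth)
    qed
    then show ?thesis using p False by auto
  qed
qed

lemma idx_conn:
  assumes "\<forall>k. i \<le> k \<and> k < j \<longrightarrow> {p!k, p!Suc k} \<in> E" "i \<le> j"
  shows "connected_in E (p!i) (p!j)"
  using assms
proof (induction j)
  case 0 then show ?case by (simp add: conn_refl)
next
  case (Suc j)
  show ?case
  proof (cases "i = Suc j")
    case True then show ?thesis by (simp add: conn_refl)
  next
    case False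
    then have "i \<le> j" using Suc by auto
    then have "connected_in E (p!i) (p!j)" using Suc by auto
    then show ?thesis using Suc(2) \<open>i \<le> j\<close> by (auto intro: conn_step)
  qed
qed

lemma root_unique:
  assumes "card {x\<in>I. connected_in E v x} = 1" "a \<in> I" "b \<in> I"
    "connected_in E v a" "connected_in E v b"
  shows "a = b"
proof -
  from assms(1) obtain x where x: "{x\<in>I. connected_in E v x} = {x}" by (auto simp: card_1_singleton_iff)
  have "a \<in> {x\<in>I. connected_in E v x}" "b \<in> {x\<in>I. connected_in E v x}" using assms by auto
  then show ?thesis unfolding x by simp
qed

lemma root_exists:
  assumes "card {x\<in>I. connected_in E v x} = 1"
  shows "\<exists>a\<in>I. connected_in E v a"
proof -
  from assms obtain x where "{x\<in>I. connected_in E v x} = {x}" by (auto simp: card_1_singleton_iff)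
  then show ?thesis by blast
qed

lemma root_intro:
  assumes "a \<in> I" "connected_in E v a" "\<And>x. x \<in> I \<Longrightarrow> connected_in E v x \<Longrightarrow> x = a"
  shows "card {x\<in>I. connected_in E v x} = 1"
proof -
  have "{x\<in>I. connected_in E v x} = {a}" using assms by blast
  then show ?thesis by simp
qed

lemma graph_mem: "is_graph_on V E \<Longrightarrow> {i,j} \<in> E \<Longrightarrow> i \<in> V \<and> j \<in> V"
  unfolding is_graph_on_def by (force simp: doubleton_eq_iff)

lemma graph_mem2: "is_graph_on V E \<Longrightarrow> e \<in> E \<Longrightarrow> e \<subseteq> V"
  unfolding is_graph_on_def by force


definition cyc :: "nat set set \<Rightarrow> nat list \<Rightarrow> bool" where
  "cyc E vs \<longleftrightarrow> length vs \<ge> 3 \<and> distinct vs \<and>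
      (\<forall>k < length vs. {vs ! k, vs ! ((k + 1) mod length vs)} \<in> E)"

lemma has_cycle_cyc: "has_cycle E \<longleftrightarrow> (\<exists>vs. cyc E vs)"
  unfolding has_cycle_def cyc_def by simp

lemma cyc_rotate:
  assumes "cyc E vs" shows "cyc E (rotate p vs)"
proof -
  let ?L = "length vs"
  have L: "?L \<ge> 3" "distinct vs" and e: "\<And>k. k < ?L \<Longrightarrow> {vs ! k, vs ! ((k + 1) mod ?L)} \<in> E"
    using assms unfolding cyc_def by auto
  have "{rotate p vs ! k, rotate p vs ! ((k + 1) mod ?L)} \<in> E" if k: "k < ?L" for k
  proof -
    have m: "(k+1) mod ?L < ?L" using L by (intro mod_less_divisor) auto
    have 1: "rotate p vs ! k = vs ! ((p + k) mod ?L)" using k by (simp add: nth_rotate)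
    have 2: "rotate p vs ! ((k + 1) mod ?L) = vs ! (((p + k) mod ?L + 1) mod ?L)"
      using m by (simp add: nth_rotate mod_add_right_eq mod_add_left_eq add.assoc mod_Suc_eq)
    have "(p + k) mod ?L < ?L" using L by (intro mod_less_divisor) auto
    then show ?thesis unfolding 1 2 by (rule e)
  qed
  then show ?thesis using L unfolding cyc_def by simp
qed

lemma cycle_from_path:
  assumes av: "\<forall>e\<in>F'. r \<notin> e" and sub: "F' \<subseteq> F"
    and p: "p \<noteq> []" "hd p = a" "last p = a'" "distinct p" "\<forall>k. Suc k < length p \<longrightarrow> {p!k, p!Suc k} \<in> F'"
    and aa: "a \<noteq> a'" "{r,a} \<in> F" "{r,a'} \<in> F"
  shows "has_cycle F"
proof -
  have lp: "length p \<ge> 2"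
  proof (rule ccontr)
    assume "\<not> 2 \<le> length p"
    moreover have "length p \<noteq> 0" using p(1) by simp
    ultimately have "length p = 1" by linarith
    then have "hd p = last p" by (cases p) auto
    then show False using p aa by simp
  qed
  have rn: "r \<notin> set p"
  proof
    assume "r \<in> set p"
    then obtain k where k: "k < length p" "p ! k = r" by (auto simp: in_set_conv_nth)
    show False
    proof (cases "Suc k < length p")
      case True
      then show ?thesis using p(5) av k by force
    next
      case False
      then have "Suc (k - 1) < length p" "Suc (k - 1) = k" using k lp by auto
      then show ?thesis using p(5)[rule_format, of "k - 1"] av k by force
    qed
  qed
  let ?vs = "r # p"
  have "cyc F ?vs"
    unfolding cyc_def
  proof (intro conjI allI impI)
    show "3 \<le> length ?vs" using lp by simp
    show "distinct ?vs" using rn p(4) by simp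
    fix k assume k: "k < length ?vs"
    show "{?vs ! k, ?vs ! ((k + 1) mod length ?vs)} \<in> F"
    proof (cases "k = 0")
      case True
      then show ?thesis using lp aa p(1,2) by (simp add: hd_conv_nth)
    next
      case False
      show ?thesis
      proof (cases "k = length p")
        case True
        then have "?vs ! k = last p" using p(1) False by (simp add: last_conv_nth)
        moreover have "(k + 1) mod length ?vs = 0" using True by simp
        ultimately show ?thesis using aa p(3) by (simp add: insert_commute)
      next
        case False2: False
        then have k1: "Suc (k - 1) < length p" "(k + 1) mod length ?vs = k + 1" using k False by auto
        then have "{p!(k-1), p!Suc (k-1)} \<in> F'" using p(5) by blast
        then show ?thesis using k1 False sub by (cases k) auto
      qed
    qed
  qed
  then show ?thesis by (auto simp: has_cycle_cyc)
qed

lemma cycle_split: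
  assumes cy: "has_cycle (F' \<union> (\<lambda>k. {r,k}) ` K)" and av: "\<forall>e\<in>F'. r \<notin> e" and nc: "\<not> has_cycle F'"
  shows "\<exists>a\<in>K. \<exists>a'\<in>K. a \<noteq> a' \<and> connected_in F' a a'"
proof -
  let ?F = "F' \<union> (\<lambda>k. {r,k}) ` K"
  obtain vs where vs: "cyc ?F vs" using cy by (auto simp: has_cycle_cyc)
  show ?thesis
  proof (cases "r \<in> set vs")
    case False
    have "cyc F' vs" unfolding cyc_def
    proof (intro conjI allI impI)
      show "3 \<le> length vs" "distinct vs" using vs by (auto simp: cyc_def)
      fix k assume k: "k < length vs"
      have m: "(k+1) mod length vs < length vs" using k by (intro mod_less_divisor) auto
      have "{vs ! k, vs ! ((k + 1) mod length vs)} \<in> ?F" using vs k by (auto simp: cyc_def)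
      moreover have "vs ! k \<noteq> r" "vs ! ((k + 1) mod length vs) \<noteq> r"
        using False k m nth_mem by metis+
      ultimately show "{vs ! k, vs ! ((k + 1) mod length vs)} \<in> F'"
        by (auto simp: doubleton_eq_iff)
    qed
    then show ?thesis using nc by (auto simp: has_cycle_cyc)
  next
    case True
    then obtain p where pp: "p < length vs" "vs ! p = r" by (auto simp: in_set_conv_nth)
    define ws where "ws = rotate p vs"
    have ws: "cyc ?F ws" unfolding ws_def by (rule cyc_rotate[OF vs])
    define L where "L = length ws"
    have L: "L \<ge> 3" "distinct ws" and e: "\<And>k. k < L \<Longrightarrow> {ws ! k, ws ! ((k + 1) mod L)} \<in> ?F"
      using ws unfolding cyc_def L_def by auto
    have w0: "ws ! 0 = r" unfolding ws_def using pp by (subst nth_rotate) auto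
    have neq: "ws ! i \<noteq> r" if "0 < i" "i < L" for i
      using L(2) that w0 nth_eq_iff_index_eq[of ws i 0] L_def by fastforce
    have inK: "ws ! i \<in> K" if th: "0 < i" "i < L" "{r, ws ! i} \<in> ?F" for i
    proof -
      have "{r, ws ! i} \<notin> F'" using av by auto
      then obtain k where "k \<in> K" "{r, ws ! i} = {r, k}" using th(3) by auto
      then show ?thesis using neq[OF th(1,2)] by (auto simp: doubleton_eq_iff)
    qed
    have a1: "ws ! 1 \<in> K" using inK[of 1] e[of 0] w0 L by auto
    have a2: "ws ! (L - 1) \<in> K"
    proof -
      have "(L - 1 + 1) mod L = 0" using L by simp
      then have "{ws ! (L-1), ws ! 0} \<in> ?F" using e[of "L - 1"] L by auto
      then show ?thesis using inK[of "L - 1"] w0 L by (auto simp: insert_commute)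
    qed
    have ne: "ws ! 1 \<noteq> ws ! (L - 1)" using L nth_eq_iff_index_eq[of ws 1 "L - 1"] L_def by auto
    have "\<forall>k. 1 \<le> k \<and> k < L - 1 \<longrightarrow> {ws!k, ws!Suc k} \<in> F'"
    proof (intro allI impI)
      fix k assume k: "1 \<le> k \<and> k < L - 1"
      then have "Suc k < L" by linarith
      then have "(k + 1) mod L = Suc k" by simp
      then have "{ws!k, ws!Suc k} \<in> ?F" using e[of k] k by auto
      moreover have "ws!k \<noteq> r" "ws ! Suc k \<noteq> r" using neq[of k] neq[of "Suc k"] k \<open>Suc k < L\<close> by auto
      ultimately show "{ws!k, ws!Suc k} \<in> F'" by (auto simp: doubleton_eq_iff)
    qed
    then have "connected_in F' (ws!1) (ws!(L-1))" using L by (intro idx_conn) auto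
    then show ?thesis using a1 a2 ne by blast
  qed
qed


lemma rf_iff: "F \<in> rooted_forests I J \<longleftrightarrow> is_graph_on (I \<union> J) F \<and> \<not> has_cycle F \<and>
   (\<forall>v\<in>I \<union> J. card {x\<in>I. connected_in F v x} = 1)"
  by (simp add: rooted_forests_def is_forest_on_def)

lemma graph_mono: "is_graph_on V E \<Longrightarrow> V \<subseteq> W \<Longrightarrow> is_graph_on W E"
  unfolding is_graph_on_def by (meson subsetD)

lemma graph_union: "is_graph_on V E \<Longrightarrow> is_graph_on V E' \<Longrightarrow> is_graph_on V (E \<union> E')"
  unfolding is_graph_on_def by (simp only: ball_Un)

lemma dir2:
  assumes disj: "I \<inter> J = {}" and r: "r \<in> I" and K: "K \<subseteq> J"
    and F': "F' \<in> rooted_forests (I - {r} \<union> K) (J - K)"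
  shows "F' \<union> (\<lambda>k. {r,k}) ` K \<in> rooted_forests I J"
proof -
  let ?V' = "(I - {r} \<union> K) \<union> (J - K)"
  let ?R = "I - {r} \<union> K"
  let ?F = "F' \<union> (\<lambda>k. {r,k}) ` K"
  have gF': "is_graph_on ?V' F'" and ncF': "\<not> has_cycle F'"
    and rootF': "\<And>v. v \<in> ?V' \<Longrightarrow> card {x\<in>?R. connected_in F' v x} = 1"
    using F' by (auto simp: rf_iff)
  have rJ: "r \<notin> J" using disj r by auto
  have rV: "r \<notin> ?V'" using rJ K by auto
  have av: "\<forall>e\<in>F'. r \<notin> e"
  proof
    fix e assume "e \<in> F'"
    then have "e \<subseteq> ?V'" by (rule graph_mem2[OF gF'])
    then show "r \<notin> e" using rV by auto
  qed
  have V': "?V' = (I \<union> J) - {r}" using K rJ by auto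
  have uniq: "u = y" if "u \<in> ?V'" "u \<in> ?R" "y \<in> ?R" "connected_in F' u y" for u y
    using root_unique[OF rootF'[OF that(1)] that(2,3) conn_refl that(4)] .
  have graph: "is_graph_on (I \<union> J) ?F"
  proof (rule graph_union)
    show "is_graph_on (I \<union> J) F'" using gF' by (rule graph_mono) (use K in auto)
    show "is_graph_on (I \<union> J) ((\<lambda>k. {r,k}) ` K)" unfolding is_graph_on_def
    proof
      fix e assume "e \<in> (\<lambda>k. {r,k}) ` K"
      then obtain k where k: "k \<in> K" "e = {r,k}" by auto
      then have "k \<in> I \<union> J" "r \<in> I \<union> J" "r \<noteq> k" using r K rJ by auto
      then show "\<exists>i j. i \<in> I \<union> J \<and> j \<in> I \<union> J \<and> i \<noteq> j \<and> e = {i, j}" using k(2) by blast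
    qed
  qed
  have nc: "\<not> has_cycle ?F"
  proof
    assume "has_cycle ?F"
    from cycle_split[OF this av ncF'] obtain a a' where "a \<in> K" "a' \<in> K" "a \<noteq> a'" "connected_in F' a a'"
      by blast
    moreover have "a \<in> ?V'" "a \<in> ?R" "a' \<in> ?R" using \<open>a \<in> K\<close> \<open>a' \<in> K\<close> K by auto
    ultimately show False using uniq[of a a'] by simp
  qed
  have root: "card {x\<in>I. connected_in ?F v x} = 1" if v: "v \<in> I \<union> J" for v
  proof (cases "v = r")
    case True
    show ?thesis
    proof (rule root_intro[OF r])
      show "connected_in ?F v r" using True by (simp add: conn_refl)
      fix x assume x: "x \<in> I" "connected_in ?F v x"
      show "x = r"
      proof (rule ccontr)
        assume xr: "x \<noteq> r"
        from conn_decomp[OF av x(2)[unfolded True]] show False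
        proof
          assume "connected_in F' r x"
          then show False using conn_avoid[OF av conn_sym] xr by blast
        next
          assume "(r = r \<or> (\<exists>k\<in>K. connected_in F' r k)) \<and> (x = r \<or> (\<exists>k\<in>K. connected_in F' x k))"
          then obtain k where "k \<in> K" "connected_in F' x k" using xr by blast
          moreover have "x \<in> ?V'" "x \<in> ?R" using x xr by auto
          ultimately have "x = k" using uniq[of x k] K by auto
          then show False using \<open>k \<in> K\<close> K disj x by auto
        qed
      qed
    qed
  next
    case False
    then have vV: "v \<in> ?V'" using V' v by auto
    obtain a where a: "a \<in> ?R" "connected_in F' v a" using root_exists[OF rootF'[OF vV]] by blast
    have vu: "y = a" if "y \<in> ?R" "connected_in F' v y" for y
      using root_unique[OF rootF'[OF vV] that(1) a(1) that(2) a(2)] .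
    show ?thesis
    proof (cases "a \<in> I - {r}")
      case True
      show ?thesis
      proof (rule root_intro)
        show "a \<in> I" using True by simp
        show "connected_in ?F v a" using a(2) by (rule conn_mono[rotated]) auto
        fix x assume x: "x \<in> I" "connected_in ?F v x"
        from conn_decomp[OF av x(2)] show "x = a"
        proof
          assume c: "connected_in F' v x"
          show "x = a"
          proof (cases "x = r")
            case True
            then show ?thesis using conn_avoid[OF av] c False by auto
          next
            case False
            then show ?thesis using vu[OF _ c] x by auto
          qed
        next
          assume "(v = r \<or> (\<exists>k\<in>K. connected_in F' v k)) \<and> (x = r \<or> (\<exists>k\<in>K. connected_in F' x k))"
          then obtain k where "k \<in> K" "connected_in F' v k" using False by blast
          then have "k = a" using vu[of k] by auto
          then show "x = a" using True \<open>k \<in> K\<close> K disj by auto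
        qed
      qed
    next
      case aK: False
      then have aK: "a \<in> K" using a(1) by blast
      show ?thesis
      proof (rule root_intro[OF r])
        have "connected_in ?F v a" using a(2) by (rule conn_mono[rotated]) auto
        moreover have "{a, r} \<in> ?F" using aK by (auto simp: insert_commute)
        ultimately show "connected_in ?F v r" by (rule conn_step)
        fix x assume x: "x \<in> I" "connected_in ?F v x"
        show "x = r"
        proof (rule ccontr)
          assume xr: "x \<noteq> r"
          from conn_decomp[OF av x(2)] show False
          proof
            assume c: "connected_in F' v x"
            then have "x = a" using vu[of x] x xr by auto
            then show False using aK K disj x by auto
          next
            assume "(v = r \<or> (\<exists>k\<in>K. connected_in F' v k)) \<and> (x = r \<or> (\<exists>k\<in>K. connected_in F' x k))"
            then obtain k where "k \<in> K" "connected_in F' x k" using xr by blast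
            moreover have "x \<in> ?V'" "x \<in> ?R" using x xr by auto
            ultimately have "x = k" using uniq[of x k] K by auto
            then show False using \<open>k \<in> K\<close> K disj x by auto
          qed
        qed
      qed
    qed
  qed
  show ?thesis using graph nc root by (simp add: rf_iff)
qed


lemma cyc_mono: "cyc E vs \<Longrightarrow> E \<subseteq> E' \<Longrightarrow> cyc E' vs"
  unfolding cyc_def by (meson subsetD)

lemma dir1:
  assumes disj: "I \<inter> J = {}" and r: "r \<in> I" and F: "F \<in> rooted_forests I J"
  defines "K \<equiv> {k. {r,k} \<in> F}" and "F' \<equiv> {e\<in>F. r \<notin> e}"
  shows "K \<subseteq> J" "F' \<in> rooted_forests (I - {r} \<union> K) (J - K)" "F = F' \<union> (\<lambda>k. {r,k}) ` K"
proof -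
  have gF: "is_graph_on (I \<union> J) F" and ncF: "\<not> has_cycle F"
    and rootF: "\<And>v. v \<in> I \<union> J \<Longrightarrow> card {x\<in>I. connected_in F v x} = 1"
    using F by (auto simp: rf_iff)
  have uniq: "u = y" if "u \<in> I \<union> J" "u \<in> I" "y \<in> I" "connected_in F u y" for u y
    using root_unique[OF rootF[OF that(1)] that(2,3) conn_refl that(4)] .
  have rJ: "r \<notin> J" using disj r by auto
  show KJ: "K \<subseteq> J"
  proof
    fix k assume "k \<in> K"
    then have e: "{r,k} \<in> F" by (simp add: K_def)
    then obtain i j where ij: "i \<in> I \<union> J" "j \<in> I \<union> J" "i \<noteq> j" "{r,k} = {i,j}"
      using gF unfolding is_graph_on_def by meson
    then have kV: "k \<in> I \<union> J" and rk: "r \<noteq> k" by (auto simp: doubleton_eq_iff)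
    show "k \<in> J"
    proof (rule ccontr)
      assume "k \<notin> J"
      then have "k \<in> I" using kV by simp
      then have "r = k" using uniq[of r k] r conn_edge[OF e] by simp
      then show False using rk by simp
    qed
  qed
  have av: "\<forall>e\<in>F'. r \<notin> e" by (simp add: F'_def)
  show FF: "F = F' \<union> (\<lambda>k. {r,k}) ` K"
  proof
    show "F' \<union> (\<lambda>k. {r,k}) ` K \<subseteq> F" by (auto simp: F'_def K_def)
    show "F \<subseteq> F' \<union> (\<lambda>k. {r,k}) ` K"
    proof
      fix e assume e: "e \<in> F"
      show "e \<in> F' \<union> (\<lambda>k. {r,k}) ` K"
      proof (cases "r \<in> e")
        case False then show ?thesis using e by (simp add: F'_def)
      next
        case True
        obtain i j where ij: "e = {i,j}" using gF e unfolding is_graph_on_def by meson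
        then have "e = {r,j} \<or> e = {r,i}" using True by auto
        then show ?thesis using e by (auto simp: K_def)
      qed
    qed
  qed
  let ?V' = "(I - {r} \<union> K) \<union> (J - K)"
  let ?R = "I - {r} \<union> K"
  have V': "?V' = (I \<union> J) - {r}" using KJ rJ by auto
  have sub: "F' \<subseteq> F" by (auto simp: F'_def)
  have graph: "is_graph_on ?V' F'"
    unfolding is_graph_on_def
  proof
    fix e assume e: "e \<in> F'"
    then obtain i j where ij: "i \<in> I \<union> J" "j \<in> I \<union> J" "i \<noteq> j" "e = {i,j}"
      using gF sub unfolding is_graph_on_def by (meson subsetD)
    have "r \<notin> e" using e av by simp
    then have "i \<in> ?V'" "j \<in> ?V'" using ij(1,2,4) V' by auto
    then have "i \<in> ?V' \<and> j \<in> ?V' \<and> i \<noteq> j \<and> e = {i, j}" using ij(3,4) by simp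
    then show "\<exists>i j. i \<in> ?V' \<and> j \<in> ?V' \<and> i \<noteq> j \<and> e = {i, j}" by (rule exI[of _ i, OF exI[of _ j]])
  qed
  have nc: "\<not> has_cycle F'"
    using ncF cyc_mono[OF _ sub] by (auto simp: has_cycle_cyc)
  have FI: "connected_in F v x" if "connected_in F' v x" for v x
    using conn_mono[OF sub that] .
  have oneI: "x = y" if "x \<in> I - {r}" "y \<in> ?R" "connected_in F' x y" for x y
  proof (cases "y \<in> K")
    case False
    then have "y \<in> I" using that by auto
    then show ?thesis using uniq[of x y] that FI by auto
  next
    case True
    then have "{y, r} \<in> F" by (simp add: K_def insert_commute)
    then have "connected_in F x r" using FI[OF that(3)] by (rule conn_step[rotated])
    then have "x = r" using uniq[of x r] that r by auto
    then show ?thesis using that by auto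
  qed
  have root: "card {x\<in>?R. connected_in F' v x} = 1" if v: "v \<in> ?V'" for v
  proof -
    have vr: "v \<noteq> r" and vV: "v \<in> I \<union> J" using v V' by auto
    obtain i where i: "i \<in> I" "connected_in F v i" using root_exists[OF rootF[OF vV]] by blast
    have ex: "\<exists>a\<in>?R. connected_in F' v a"
      using conn_decomp[OF av i(2)[unfolded FF]]
    proof
      assume c: "connected_in F' v i"
      then have "i \<noteq> r" using conn_avoid[OF av] vr by auto
      then show ?thesis using c i(1) by blast
    next
      assume "(v = r \<or> (\<exists>k\<in>K. connected_in F' v k)) \<and> (i = r \<or> (\<exists>k\<in>K. connected_in F' i k))"
      then show ?thesis using vr by blast
    qed
    then obtain a where a: "a \<in> ?R" "connected_in F' v a" by blast
    show ?thesis
    proof (rule root_intro[OF a])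
      fix y assume y: "y \<in> ?R" "connected_in F' v y"
      have ay: "connected_in F' a y" using conn_trans[OF conn_sym[OF a(2)] y(2)] .
      show "y = a"
      proof (cases "a \<in> I - {r}")
        case True then show ?thesis using oneI[OF True y(1) ay] by simp
      next
        case aK: False
        show ?thesis
        proof (cases "y \<in> I - {r}")
          case True then show ?thesis using oneI[OF True a(1) conn_sym[OF ay]] by simp
        next
          case False
          then have "a \<in> K" "y \<in> K" using aK a(1) y(1) by auto
          show ?thesis
          proof (rule ccontr)
            assume ne: "y \<noteq> a"
            obtain p where p: "p \<noteq> []" "hd p = a" "last p = y" "distinct p"
              "\<forall>k. Suc k < length p \<longrightarrow> {p!k, p!Suc k} \<in> F'"
              using conn_path[OF ay] by blast
            have "has_cycle F"
              using cycle_from_path[OF av sub p] ne \<open>a \<in> K\<close> \<open>y \<in> K\<close> by (auto simp: K_def)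
            then show False using ncF by simp
          qed
        qed
      qed
    qed
  qed
  show "F' \<in> rooted_forests (I - {r} \<union> K) (J - K)"
    using graph nc root by (simp add: rf_iff)
qed


lemma rf_finite:
  assumes "finite (I \<union> J)" shows "finite (rooted_forests I J)"
proof (rule finite_subset)
  show "rooted_forests I J \<subseteq> Pow (Pow (I \<union> J))"
  proof
    fix F assume "F \<in> rooted_forests I J"
    then have g: "is_graph_on (I \<union> J) F" by (simp add: rf_iff)
    show "F \<in> Pow (Pow (I \<union> J))" using graph_mem2[OF g] by auto
  qed
  show "finite (Pow (Pow (I \<union> J)))" using assms by simp
qed


lemma rf_av:
  assumes "F' \<in> rooted_forests (I - {r} \<union> K) (J - K)" "K \<subseteq> J" "r \<notin> J"
  shows "\<forall>e\<in>F'. r \<notin> e"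
proof
  fix e assume "e \<in> F'"
  then have "e \<subseteq> (I - {r} \<union> K) \<union> (J - K)" using assms(1) graph_mem2 by (auto simp: rf_iff)
  then show "r \<notin> e" using assms(2,3) by auto
qed


lemma recover:
  assumes av: "\<forall>e\<in>F'. r \<notin> e" and rK: "r \<notin> K"
  shows "{k. {r,k} \<in> F' \<union> (\<lambda>k. {r,k}) ` K} = K" "{e \<in> F' \<union> (\<lambda>k. {r,k}) ` K. r \<notin> e} = F'"
proof -
  show "{k. {r,k} \<in> F' \<union> (\<lambda>k. {r,k}) ` K} = K"
  proof (intro set_eqI iffI)
    fix k assume "k \<in> {k. {r,k} \<in> F' \<union> (\<lambda>k. {r,k}) ` K}"
    then have "{r,k} \<in> (\<lambda>k. {r,k}) ` K" using av by auto
    then obtain k' where "k' \<in> K" "{r,k} = {r,k'}" by auto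
    then show "k \<in> K" using rK by (auto simp: doubleton_eq_iff)
  qed auto
  show "{e \<in> F' \<union> (\<lambda>k. {r,k}) ` K. r \<notin> e} = F'" using av by auto
qed


lemma sum_decomp:
  assumes disj: "I \<inter> J = {}" and r: "r \<in> I" and fin: "finite (I \<union> J)"
  shows "(\<Sum>F\<in>rooted_forests I J. g F) =
    (\<Sum>K\<in>Pow J. \<Sum>F'\<in>rooted_forests (I - {r} \<union> K) (J - K). g (F' \<union> (\<lambda>k. {r,k}) ` K))"
proof -
  let ?A = "Sigma (Pow J) (\<lambda>K. rooted_forests (I - {r} \<union> K) (J - K))"
  let ?h = "\<lambda>(K, F'). F' \<union> (\<lambda>k. {r,k}) ` K"
  have rJ: "r \<notin> J" using disj r by auto
  have finJ: "finite J" using fin by simp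
  have "(\<Sum>K\<in>Pow J. \<Sum>F'\<in>rooted_forests (I - {r} \<union> K) (J - K). g (F' \<union> (\<lambda>k. {r,k}) ` K))
      = (\<Sum>(K,F')\<in>?A. g (F' \<union> (\<lambda>k. {r,k}) ` K))"
  proof (rule sum.Sigma)
    show "finite (Pow J)" using finJ by simp
    show "\<forall>K\<in>Pow J. finite (rooted_forests (I - {r} \<union> K) (J - K))"
    proof
      fix K assume "K \<in> Pow J"
      then have "(I - {r} \<union> K) \<union> (J - K) \<subseteq> I \<union> J" by auto
      then have "finite ((I - {r} \<union> K) \<union> (J - K))" using fin by (rule finite_subset)
      then show "finite (rooted_forests (I - {r} \<union> K) (J - K))" by (rule rf_finite)
    qed
  qed
  also have "\<dots> = (\<Sum>x\<in>?A. g (?h x))" by (simp add: case_prod_beta)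
  also have "\<dots> = (\<Sum>F\<in>rooted_forests I J. g F)"
  proof (rule sum.reindex_bij_betw)
    show "bij_betw ?h ?A (rooted_forests I J)"
      unfolding bij_betw_def
    proof
      show "inj_on ?h ?A"
      proof (rule inj_onI)
        fix x y assume x: "x \<in> ?A" and y: "y \<in> ?A" and e: "?h x = ?h y"
        obtain K1 F1 where x1: "x = (K1, F1)" by (cases x)
        obtain K2 F2 where y1: "y = (K2, F2)" by (cases y)
        have b1: "K1 \<subseteq> J" "F1 \<in> rooted_forests (I - {r} \<union> K1) (J - K1)" using x x1 by auto
        have b2: "K2 \<subseteq> J" "F2 \<in> rooted_forests (I - {r} \<union> K2) (J - K2)" using y y1 by auto
        have a1: "K1 \<subseteq> J" "\<forall>e\<in>F1. r \<notin> e" using b1 rf_av[OF b1(2) b1(1) rJ] by auto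
        have a2: "K2 \<subseteq> J" "\<forall>e\<in>F2. r \<notin> e" using b2 rf_av[OF b2(2) b2(1) rJ] by auto
        have rK: "r \<notin> K1" "r \<notin> K2" using a1 a2 rJ by auto
        have e': "F1 \<union> (\<lambda>k. {r,k}) ` K1 = F2 \<union> (\<lambda>k. {r,k}) ` K2" using e x1 y1 by simp
        have "K1 = K2" using recover(1)[OF a1(2) rK(1)] recover(1)[OF a2(2) rK(2)] e' by simp
        moreover have "F1 = F2" using recover(2)[OF a1(2) rK(1)] recover(2)[OF a2(2) rK(2)] e' by simp
        ultimately show "x = y" using x1 y1 by simp
      qed
      show "?h ` ?A = rooted_forests I J"
      proof
        show "?h ` ?A \<subseteq> rooted_forests I J"
        proof (rule image_subsetI)
          fix x assume x: "x \<in> ?A"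
          obtain K F' where x1: "x = (K, F')" by (cases x)
          have "K \<subseteq> J" "F' \<in> rooted_forests (I - {r} \<union> K) (J - K)" using x x1 by auto
          then have "F' \<union> (\<lambda>k. {r,k}) ` K \<in> rooted_forests I J" by (rule dir2[OF disj r])
          then show "?h x \<in> rooted_forests I J" using x1 by simp
        qed
        show "rooted_forests I J \<subseteq> ?h ` ?A"
        proof
          fix F assume F: "F \<in> rooted_forests I J"
          note d = dir1[OF disj r F]
          have "({k. {r,k} \<in> F}, {e\<in>F. r \<notin> e}) \<in> ?A" using d(1,2) by simp
          moreover have "F = ?h ({k. {r,k} \<in> F}, {e\<in>F. r \<notin> e})" using d(3) by simp
          ultimately show "F \<in> ?h ` ?A" by (rule rev_image_eqI)
        qed
      qed
    qed
  qed
  finally show ?thesis by simp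
qed


lemma weight_split:
  assumes av: "\<forall>e\<in>F'. r \<notin> e" and gF': "is_graph_on V F'" and finV: "finite V"
    and rK: "r \<notin> K" and finK: "finite K"
    and sym: "\<And>k. k \<in> K \<Longrightarrow> \<zeta> r k = \<zeta> k r"
  shows "forest_weight \<zeta> (F' \<union> (\<lambda>k. {r,k}) ` K) = forest_weight \<zeta> F' * (\<Prod>k\<in>K. cmod (\<zeta> k r))"
proof -
  define P where "P G = {(i, j). i < j \<and> {i, j} \<in> G}" for G :: "nat set set"
  let ?S = "(\<lambda>k. {r,k}) ` K"
  let ?w = "\<lambda>(i, j). cmod (\<zeta> i j)"
  define f where "f k = (min r k, max r k)" for k
  have PU: "P (F' \<union> ?S) = P F' \<union> P ?S" by (auto simp: P_def)
  have disjP: "P F' \<inter> P ?S = {}" using av by (auto simp: P_def)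
  have finP: "finite (P F')"
  proof (rule finite_subset)
    show "P F' \<subseteq> V \<times> V" using graph_mem[OF gF'] by (auto simp: P_def)
    show "finite (V \<times> V)" using finV by simp
  qed
  have PS: "P ?S = f ` K"
  proof
    show "P ?S \<subseteq> f ` K"
    proof
      fix x assume "x \<in> P ?S"
      then obtain i j k where x: "x = (i,j)" "i < j" "k \<in> K" "{i,j} = {r,k}" by (auto simp: P_def)
      then have "x = f k" by (auto simp: f_def doubleton_eq_iff)
      then show "x \<in> f ` K" using x(3) by simp
    qed
    show "f ` K \<subseteq> P ?S"
    proof
      fix x assume "x \<in> f ` K"
      then obtain k where k: "k \<in> K" "x = f k" by auto
      then have "r \<noteq> k" using rK by auto
      then show "x \<in> P ?S" using k by (auto simp: P_def f_def min_def max_def insert_commute)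
    qed
  qed
  have inj: "inj_on f K"
  proof (rule inj_onI)
    fix k1 k2 assume "k1 \<in> K" "k2 \<in> K" "f k1 = f k2"
    then have "{min r k1, max r k1} = {min r k2, max r k2}" by (simp add: f_def)
    moreover have "{min r k, max r k} = {r, k}" for k by (auto simp: min_def max_def)
    ultimately have "{r, k1} = {r, k2}" by simp
    then show "k1 = k2" using rK \<open>k1 \<in> K\<close> by (auto simp: doubleton_eq_iff)
  qed
  have "forest_weight \<zeta> (F' \<union> ?S) = prod ?w (P F' \<union> P ?S)"
    unfolding forest_weight_def P_def[symmetric] PU ..
  also have "\<dots> = prod ?w (P F') * prod ?w (P ?S)"
    using finP finK disjP PS by (intro prod.union_disjoint) auto
  also have "prod ?w (P ?S) = (\<Prod>k\<in>K. ?w (f k))"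
    unfolding PS using prod.reindex[OF inj, of ?w] by simp
  also have "\<dots> = (\<Prod>k\<in>K. cmod (\<zeta> k r))"
  proof (rule prod.cong)
    fix k assume "k \<in> K"
    then show "?w (f k) = cmod (\<zeta> k r)" using sym[of k] by (auto simp: f_def min_def max_def)
  qed simp
  finally show ?thesis by (simp add: forest_weight_def P_def)
qed




lemma step_eq:
  assumes IJ: "I \<subseteq> {1..n}" "J \<subseteq> {1..n}" "I \<inter> J = {}" and r: "r \<in> I"
    and sym: "\<And>i j. i \<in> {1..n} \<Longrightarrow> j \<in> {1..n} \<Longrightarrow> \<zeta> i j = \<zeta> j i"
  shows "(\<Prod>i\<in>I \<union> J. exp (2 * b i)) * (\<Sum>G\<in>rooted_forests I J. forest_weight \<zeta> G)
    = exp (2 * b r) * (\<Sum>K\<in>Pow J. (\<Prod>i\<in>K. cmod (\<zeta> i r)) *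
        ((\<Prod>i\<in>(I - {r} \<union> K) \<union> (J - K). exp (2 * b i)) *
         (\<Sum>G\<in>rooted_forests (I - {r} \<union> K) (J - K). forest_weight \<zeta> G)))"
proof -
  let ?E = "\<lambda>X. \<Prod>i\<in>X. exp (2 * b i)"
  let ?V = "I \<union> J"
  have fin: "finite ?V" using IJ finite_subset[OF _ finite_atLeastAtMost] by (meson finite_Un)
  have finJ: "finite J" using fin by simp
  have rJ: "r \<notin> J" using IJ r by auto
  have V: "(I - {r} \<union> K) \<union> (J - K) = ?V - {r}" if "K \<subseteq> J" for K using that rJ r by auto
  have EV: "?E ?V = exp (2 * b r) * ?E (?V - {r})"
    using fin r by (intro prod.remove) auto
  have inner: "(\<Sum>F'\<in>rooted_forests (I - {r} \<union> K) (J - K). forest_weight \<zeta> (F' \<union> (\<lambda>k. {r,k}) ` K))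
      = (\<Prod>i\<in>K. cmod (\<zeta> i r)) * (\<Sum>G\<in>rooted_forests (I - {r} \<union> K) (J - K). forest_weight \<zeta> G)"
    if K: "K \<in> Pow J" for K
  proof -
    have KJ: "K \<subseteq> J" using K by simp
    have "(\<Sum>F'\<in>rooted_forests (I - {r} \<union> K) (J - K). forest_weight \<zeta> (F' \<union> (\<lambda>k. {r,k}) ` K))
      = (\<Sum>F'\<in>rooted_forests (I - {r} \<union> K) (J - K). forest_weight \<zeta> F' * (\<Prod>i\<in>K. cmod (\<zeta> i r)))"
    proof (rule sum.cong[OF refl])
      fix F' assume F': "F' \<in> rooted_forests (I - {r} \<union> K) (J - K)"
      have g: "is_graph_on ((I - {r} \<union> K) \<union> (J - K)) F'" using F' by (simp add: rf_iff)
      have finV': "finite ((I - {r} \<union> K) \<union> (J - K))" using fin V[OF KJ] by simp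
      have finK: "finite K" using finJ KJ by (rule finite_subset[rotated])
      have "\<zeta> r k = \<zeta> k r" if "k \<in> K" for k
      proof (rule sym)
        show "r \<in> {1..n}" using IJ r by auto
        show "k \<in> {1..n}" using IJ KJ that by auto
      qed
      then show "forest_weight \<zeta> (F' \<union> (\<lambda>k. {r,k}) ` K) = forest_weight \<zeta> F' * (\<Prod>i\<in>K. cmod (\<zeta> i r))"
        using weight_split[OF rf_av[OF F' KJ rJ] g finV' _ finK] rJ KJ by auto
    qed
    also have "\<dots> = (\<Prod>i\<in>K. cmod (\<zeta> i r)) * (\<Sum>G\<in>rooted_forests (I - {r} \<union> K) (J - K). forest_weight \<zeta> G)"
      by (simp add: sum_distrib_left mult.commute)
    finally show ?thesis .
  qed
  have "?E ?V * (\<Sum>G\<in>rooted_forests I J. forest_weight \<zeta> G)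
      = ?E ?V * (\<Sum>K\<in>Pow J. (\<Prod>i\<in>K. cmod (\<zeta> i r)) * (\<Sum>G\<in>rooted_forests (I - {r} \<union> K) (J - K). forest_weight \<zeta> G))"
    using sum_decomp[OF IJ(3) r fin, of "forest_weight \<zeta>"] inner by simp
  also have "\<dots> = exp (2 * b r) * (\<Sum>K\<in>Pow J. ?E (?V - {r}) * ((\<Prod>i\<in>K. cmod (\<zeta> i r)) * (\<Sum>G\<in>rooted_forests (I - {r} \<union> K) (J - K). forest_weight \<zeta> G)))"
    unfolding EV by (simp add: sum_distrib_left mult.assoc)
  also have "\<dots> = exp (2 * b r) * (\<Sum>K\<in>Pow J. (\<Prod>i\<in>K. cmod (\<zeta> i r)) *
        (?E ((I - {r} \<union> K) \<union> (J - K)) *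
         (\<Sum>G\<in>rooted_forests (I - {r} \<union> K) (J - K). forest_weight \<zeta> G)))"
    by (intro arg_cong[where f="\<lambda>x. exp (2 * b r) * x"] sum.cong refl) (simp add: V mult_ac)
  finally show ?thesis .
qed

lemma rf_empty: "rooted_forests {} J = (if J = {} then {{}} else {})"
proof (cases "J = {}")
  case True
  have "F \<in> rooted_forests {} {} \<longleftrightarrow> F = {}" for F
  proof
    assume "F \<in> rooted_forests {} {}"
    then have "is_graph_on {} F" by (simp add: rf_iff)
    then show "F = {}" unfolding is_graph_on_def by auto
  next
    assume "F = {}"
    moreover have "\<not> has_cycle {}" unfolding has_cycle_def by force
    ultimately show "F \<in> rooted_forests {} {}" by (simp add: rf_iff is_graph_on_def)
  qed
  then show ?thesis using True by auto
next
  case False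
  then obtain v where "v \<in> J" by auto
  then show ?thesis using False by (auto simp: rf_iff)
qed

theorem mainTheorem7:
  fixes n :: nat and b :: "nat \<Rightarrow> real" and \<zeta> :: "nat \<Rightarrow> nat \<Rightarrow> complex"
    and \<iota> :: "nat set \<Rightarrow> nat"
  assumes "n \<ge> 1"
    and "\<And>i. i \<in> {1..n} \<Longrightarrow> b i \<ge> 0"
    and "\<And>i j. i \<in> {1..n} \<Longrightarrow> j \<in> {1..n} \<Longrightarrow> \<zeta> i j = \<zeta> j i"
    and "\<And>I. I \<subseteq> {1..n} \<Longrightarrow> I \<noteq> {} \<Longrightarrow> \<iota> I \<in> I"
  shows "solves_system n b \<zeta> \<iota>
           (\<lambda>I J. (\<Prod>i\<in>I \<union> J. exp (2 * b i)) * (\<Sum>G\<in>rooted_forests I J. forest_weight \<zeta> G))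
       \<and> (\<forall>h. solves_system n b \<zeta> \<iota> h \<longrightarrow>
             (\<forall>I J. I \<subseteq> {1..n} \<and> J \<subseteq> {1..n} \<and> I \<inter> J = {} \<longrightarrow>
                h I J = (\<Prod>i\<in>I \<union> J. exp (2 * b i)) *
                        (\<Sum>G\<in>rooted_forests I J. forest_weight \<zeta> G)))"
proof -
  define g where "g = (\<lambda>I J. (\<Prod>i\<in>I \<union> J. exp (2 * b i)) * (\<Sum>G\<in>rooted_forests I J. forest_weight \<zeta> G))"
  have ex: "solves_system n b \<zeta> \<iota> g"
    unfolding solves_system_def
  proof (intro allI impI conjI)
    fix I J assume IJ: "I \<subseteq> {1..n} \<and> J \<subseteq> {1..n} \<and> I \<inter> J = {}"
    show "g {} J = (if J = {} then 1 else 0)"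
      by (simp add: g_def rf_empty forest_weight_def)
    show "g I J = exp (2 * b (\<iota> I)) *
            (\<Sum>K\<in>Pow J. (\<Prod>i\<in>K. cmod (\<zeta> i (\<iota> I))) * g ((I - {\<iota> I}) \<union> K) (J - K))"
      if "I \<noteq> {}"
    proof -
      have r: "\<iota> I \<in> I" using assms(4) IJ that by blast
      show "g I J = exp (2 * b (\<iota> I)) *
            (\<Sum>K\<in>Pow J. (\<Prod>i\<in>K. cmod (\<zeta> i (\<iota> I))) * g ((I - {\<iota> I}) \<union> K) (J - K))"
        unfolding g_def using step_eq[of I n J "\<iota> I" \<zeta> b] IJ r assms(3) by simp
    qed
  qed
  have un: "h I J = g I J" if h: "solves_system n b \<zeta> \<iota> h"
    and IJ: "I \<subseteq> {1..n}" "J \<subseteq> {1..n}" "I \<inter> J = {}" for h I J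
  proof -
    have "\<forall>I J. I \<subseteq> {1..n} \<and> J \<subseteq> {1..n} \<and> I \<inter> J = {} \<and> card (I \<union> J) = m \<longrightarrow> h I J = g I J" for m
    proof (induction m rule: less_induct)
      case (less m)
      show ?case
      proof (intro allI impI)
        fix I J assume A: "I \<subseteq> {1..n} \<and> J \<subseteq> {1..n} \<and> I \<inter> J = {} \<and> card (I \<union> J) = m"
        have hI: "(I = {} \<longrightarrow> h {} J = (if J = {} then 1 else 0)) \<and>
          (I \<noteq> {} \<longrightarrow> h I J = exp (2 * b (\<iota> I)) *
            (\<Sum>K\<in>Pow J. (\<Prod>i\<in>K. cmod (\<zeta> i (\<iota> I))) * h ((I - {\<iota> I}) \<union> K) (J - K)))"
          using h A unfolding solves_system_def by blast
        have gI: "(I = {} \<longrightarrow> g {} J = (if J = {} then 1 else 0)) \<and>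
          (I \<noteq> {} \<longrightarrow> g I J = exp (2 * b (\<iota> I)) *
            (\<Sum>K\<in>Pow J. (\<Prod>i\<in>K. cmod (\<zeta> i (\<iota> I))) * g ((I - {\<iota> I}) \<union> K) (J - K)))"
          using ex A unfolding solves_system_def by blast
        show "h I J = g I J"
        proof (cases "I = {}")
          case True then show ?thesis using hI gI by simp
        next
          case False
          then have r: "\<iota> I \<in> I" using assms(4) A by blast
          have fin: "finite (I \<union> J)" using A finite_subset[OF _ finite_atLeastAtMost] by (meson finite_Un)
          have "h ((I - {\<iota> I}) \<union> K) (J - K) = g ((I - {\<iota> I}) \<union> K) (J - K)" if K: "K \<in> Pow J" for K
          proof -
            have eq: "(I - {\<iota> I} \<union> K) \<union> (J - K) = (I \<union> J) - {\<iota> I}" using K r A by auto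
            have "card ((I - {\<iota> I} \<union> K) \<union> (J - K)) < m"
            proof -
              have "card (I \<union> J) > 0" using fin r by (auto simp: card_gt_0_iff)
              then show ?thesis unfolding eq using A r fin by (simp add: card_Diff1_less)
            qed
            moreover have "I - {\<iota> I} \<union> K \<subseteq> {1..n}" "J - K \<subseteq> {1..n}" "(I - {\<iota> I} \<union> K) \<inter> (J - K) = {}"
              using A K by auto
            ultimately show ?thesis using less.IH by blast
          qed
          then have "(\<Sum>K\<in>Pow J. (\<Prod>i\<in>K. cmod (\<zeta> i (\<iota> I))) * h ((I - {\<iota> I}) \<union> K) (J - K))
            = (\<Sum>K\<in>Pow J. (\<Prod>i\<in>K. cmod (\<zeta> i (\<iota> I))) * g ((I - {\<iota> I}) \<union> K) (J - K))"
            by (intro sum.cong refl) simp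
          then show ?thesis using hI gI False by simp
        qed
      qed
    qed
    then show ?thesis using IJ by blast
  qed
  have "solves_system n b \<zeta> \<iota> g \<and> (\<forall>h. solves_system n b \<zeta> \<iota> h \<longrightarrow>
             (\<forall>I J. I \<subseteq> {1..n} \<and> J \<subseteq> {1..n} \<and> I \<inter> J = {} \<longrightarrow> h I J = g I J))"
    using ex un by blast
  then show ?thesis unfolding g_def .
qed

end
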